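(* Let $\Sigma$ be a set of constant symbols with $\star\notin\Sigma$, let $W=c_1\cdots c_n$ be a word over $\Sigma$, and let $p=(p_0,\dots,p_n)$ and $q=(q_0,\dots,q_n)$ be two tuples of pairwise distinct constants of $\mathbf P$. For every observation $O\in\mathrm{Matr}_\Sigma(\mathcal O)$, the wiring $O\bar W_p$ is nilpotent if and only if $O\bar W_q$ is nilpotent.
   Context: Terms: first-order terms built from an infinite set of variables, a binary function symbol $\bullet$ written infix (not associative; by convention right-associating, $t\bullet u\bullet v:=t\bullet(u\bullet v)$), infinitely many constant symbols including a distinguished constant $\star$, and for each $n\ge1$ at least one $n$-ary function symbol. $\mathrm{var}(t)$ is the set of variables of $t$. The height of an occurrence of a variable in $t$ is its distance from the root of the tree of $t$. A renaming is a bijective substitution mapping variables to variables. A flow is a pair of terms written $t\leftarrow u$ with $\mathrm{var}(t)\subseteq\mathrm{var}(u)$, considered up to renaming. The product of flows $u\leftarrow v$ and $t\leftarrow w$ (representatives chosen with disjoint variable sets) is defined iff $v$ and $t$ are unifiable, and then equals $u\theta\leftarrow w\theta$ with $\theta$ a most general unifier of $v,t$. A wiring is a finite set of flows, written as a formal sum, with $0$ the empty wiring; product $FG=\{fg: f\in F,g\in G, fg\text{ defined}\}$, $F^n$ the $n$-fold product. $F$ is nilpotent if $F^n=0$ for some $n\in\mathbb N$. A flow $t\leftarrow u$ is balanced if for every variable $x$, all occurrences of $x$ in $t$ and in $u$ have the same height; $\mathcal B$ is the set of wirings all of whose flows are balanced. A semiring is a set of wirings containing $0$ and closed under finite sums (unions)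 and products. Tensor product of flows (variables renamed apart): $(u\leftarrow v)\otimes(t\leftarrow w):=u\bullet t\leftarrow v\bullet w$; extended to wirings by $(\sum_i f_i)\otimes(\sum_j g_j)=\sum_{i,j}f_i\otimes g_j$, and to semirings by $\mathcal A\otimes\mathcal B=\{\sum_i F_i\otimes G_i: F_i\in\mathcal A,G_i\in\mathcal B\}$, right-associating. For a set $E$ of closed terms, $\mathcal C(E)=\{\sum_i t_i\leftarrow u_i: t_i,u_i\in E\}$. For a set of symbols $\mathbf S$ and semiring $\mathcal A$, $\mathcal R_{\mathbf S}(\mathcal A)$ is the set of wirings of $\mathcal A$ not using symbols of $\mathbf S$. Fix disjoint infinite sets of constants $\mathbf P$ (position constants) and $\mathbf S$ (states), a unary function symbol $\mathrm M$, and constants $\mathrm L,\mathrm R$. The observation semiring is $\mathcal O:=\mathcal C(\mathbf S)\otimes\mathcal R_{\mathbf P}(\mathcal B)$. For a set of constants $\Sigma$ and semiring $\mathcal A$, $\mathrm{Matr}_\Sigma(\mathcal A):=\mathcal C(\Sigma\cup\{\star\})\otimes\mathcal C(\{\mathrm L,\mathrm R\})\otimes\mathcal A$. An observation over $\Sigma$ is any element of $\mathrm{Matr}_\Sigma(\mathcal O)$. Word representation: write $t\rightleftarrows u$ for $t\leftarrow u+u\leftarrow t$. For $W=c_1\cdots c_n$ over $\Sigma$ and pairwise distinct $p=(p_0,\dots,p_n)\in\mathbf P^{n+1}$, set $p_{n+1}=p_0$, $c_0=c_{n+1}=\star$, and, with $x,y$ variables, $\bar W_p=\sum_{i=0}^n\big(c_i\bullet\mathrm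 L\bullet x\bullet y\bullet\mathrm M(p_i)\ \rightleftarrows\ c_{i+1}\bullet\mathrm R\bullet x\bullet y\bullet\mathrm M(p_{i+1})\big)$. *)

theory Defs
  imports Main
begin

text \<open>Constant symbols: the distinguished constant Star, the constants L and R,
  position constants CP k (the set P), state constants CS k (the set S), and
  infinitely many further constants CO k.\<close>
datatype const = Star | CL | CR | CP nat | CS nat | CO nat

text \<open>A function
  symbol applied to a list of arguments is identified together with its arity
  (the length of the list), so for every n there are infinitely many n-ary symbols.\<close>
datatype fsym = FM | FS nat

datatype trm = Var nat | Cst const | Bul trm trm | Fn fsym "trm list"

definition PosSet :: "const set" where "PosSet = range CP"
definition StateSet :: "const set" where "StateSet = range CS"

fun subst :: "(nat \<Rightarrow> trm) \<Rightarrow> trm \<Rightarrow> trm" where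
  "subst \<sigma> (Var x) = \<sigma> x"
| "subst \<sigma> (Cst c) = Cst c"
| "subst \<sigma> (Bul a b) = Bul (subst \<sigma> a) (subst \<sigma> b)"
| "subst \<sigma> (Fn f ts) = Fn f (map (subst \<sigma>) ts)"

fun vars :: "trm \<Rightarrow> nat set" where
  "vars (Var x) = {x}"
| "vars (Cst c) = {}"
| "vars (Bul a b) = vars a \<union> vars b"
| "vars (Fn f ts) = \<Union> (set (map vars ts))"

fun varh :: "nat \<Rightarrow> trm \<Rightarrow> nat set" where
  "varh x (Var y) = (if x = y then {0} else {})"
| "varh x (Cst c) = {}"
| "varh x (Bul a b) = Suc ` (varh x a \<union> varh x b)"
| "varh x (Fn f ts) = Suc ` \<Union> (set (map (varh x) ts))"

fun usesP :: "trm \<Rightarrow> bool" where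
  "usesP (Var x) = False"
| "usesP (Cst c) = (c \<in> PosSet)"
| "usesP (Bul a b) = (usesP a \<or> usesP b)"
| "usesP (Fn f ts) = list_ex usesP ts"

definition renaming :: "(nat \<Rightarrow> trm) \<Rightarrow> bool" where
  "renaming \<rho> \<longleftrightarrow> (\<exists>\<pi>. bij \<pi> \<and> \<rho> = Var \<circ> \<pi>)"

definition is_mgu :: "(nat \<Rightarrow> trm) \<Rightarrow> trm \<Rightarrow> trm \<Rightarrow> bool" where
  "is_mgu \<theta> a b \<longleftrightarrow> subst \<theta> a = subst \<theta> b \<and>
     (\<forall>\<sigma>. subst \<sigma> a = subst \<sigma> b \<longrightarrow> (\<exists>\<tau>. \<forall>x. \<sigma> x = subst \<tau> (\<theta> x)))"

text \<open>A flow representative (t, u) stands for t \<leftarrow> u. A flow is the class of a valid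
  representative up to renaming. A wiring is a finite set of flows.\<close>
type_synonym rep = "trm \<times> trm"
type_synonym flow = "rep set"
type_synonym wiring = "flow set"

definition valid_rep :: "rep \<Rightarrow> bool" where
  "valid_rep r \<longleftrightarrow> vars (fst r) \<subseteq> vars (snd r)"

definition cls :: "rep \<Rightarrow> flow" where
  "cls r = {(subst \<rho> (fst r), subst \<rho> (snd r)) | \<rho>. renaming \<rho>}"

definition is_flow :: "flow \<Rightarrow> bool" where
  "is_flow f \<longleftrightarrow> (\<exists>r. valid_rep r \<and> f = cls r)"

definition is_wiring :: "wiring \<Rightarrow> bool" where
  "is_wiring F \<longleftrightarrow> finite F \<and> (\<forall>f\<in>F. is_flow f)"

definition rvars :: "rep \<Rightarrow> nat set" where
  "rvars r = vars (fst r) \<union> vars (snd r)"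

definition wprod :: "wiring \<Rightarrow> wiring \<Rightarrow> wiring" where
  "wprod F G = {cls (subst \<theta> u, subst \<theta> w) | f g u v t w \<theta>.
      f \<in> F \<and> g \<in> G \<and> (u, v) \<in> f \<and> (t, w) \<in> g \<and>
      rvars (u, v) \<inter> rvars (t, w) = {} \<and> is_mgu \<theta> v t}"

text \<open>wpow F n is the (n+1)-fold product F^(n+1).\<close>
primrec wpow :: "wiring \<Rightarrow> nat \<Rightarrow> wiring" where
  "wpow F 0 = F"
| "wpow F (Suc n) = wprod (wpow F n) F"

definition nilpotent :: "wiring \<Rightarrow> bool" where
  "nilpotent F \<longleftrightarrow> (\<exists>n. wpow F n = {})"

definition balanced :: "rep \<Rightarrow> bool" where
  "balanced r \<longleftrightarrow> (\<forall>x. \<exists>h. varh x (fst r) \<union> varh x (snd r) \<subseteq> {h})"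

definition Bal :: "wiring set" where
  "Bal = {F. is_wiring F \<and> (\<forall>f\<in>F. \<forall>r\<in>f. balanced r)}"

definition wtensor :: "wiring \<Rightarrow> wiring \<Rightarrow> wiring" where
  "wtensor F G = {cls (Bul u t, Bul v w) | f g u v t w.
      f \<in> F \<and> g \<in> G \<and> (u, v) \<in> f \<and> (t, w) \<in> g \<and> rvars (u, v) \<inter> rvars (t, w) = {}}"

text \<open>Tensor product of semirings: finite sums of tensors.\<close>
definition stensor :: "wiring set \<Rightarrow> wiring set \<Rightarrow> wiring set" where
  "stensor A B = {\<Union>FG\<in>set ps. wtensor (fst FG) (snd FG) | ps. set ps \<subseteq> A \<times> B}"

definition Cl :: "trm set \<Rightarrow> wiring set" where
  "Cl E = {F. finite F \<and> (\<forall>f\<in>F. \<exists>t\<in>E. \<exists>u\<in>E. f = cls (t, u))}"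

definition RP :: "wiring set \<Rightarrow> wiring set" where
  "RP A = {F \<in> A. \<forall>f\<in>F. \<forall>r\<in>f. \<not> usesP (fst r) \<and> \<not> usesP (snd r)}"

definition Obs :: "wiring set" where
  "Obs = stensor (Cl (Cst ` StateSet)) (RP Bal)"

definition Matr :: "const set \<Rightarrow> wiring set \<Rightarrow> wiring set" where
  "Matr \<Sigma> A = stensor (Cl (Cst ` (\<Sigma> \<union> {Star}))) (stensor (Cl (Cst ` {CL, CR})) A)"

definition wpt :: "const \<Rightarrow> const \<Rightarrow> const \<Rightarrow> trm" where
  "wpt c d pos = Bul (Cst c) (Bul (Cst d) (Bul (Var 0) (Bul (Var 1) (Fn FM [Cst pos]))))"

text \<open>W is the list [c_1,...,c_n]; p is the list [p_0,...,p_n] of indices of the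
  position constants CP (p ! i).\<close>
definition letter :: "const list \<Rightarrow> nat \<Rightarrow> const" where
  "letter W i = (if 1 \<le> i \<and> i \<le> length W then W ! (i - 1) else Star)"

definition wordrep :: "const list \<Rightarrow> nat list \<Rightarrow> wiring" where
  "wordrep W p = (\<Union>i\<in>{0..length W}.
     (let a = wpt (letter W i) CL (CP (p ! i));
          b = wpt (letter W (Suc i)) CR (CP (p ! (if i = length W then 0 else Suc i)))
      in {cls (a, b), cls (b, a)}))"

end

theory Submission
  imports Defs
begin

fun ren :: "(const \<Rightarrow> const) \<Rightarrow> trm \<Rightarrow> trm" where
  "ren g (Var x) = Var x"
| "ren g (Cst c) = Cst (g c)"
| "ren g (Bul a b) = Bul (ren g a) (ren g b)"
| "ren g (Fn f ts) = Fn f (map (ren g) ts)"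

lemma ren_subst: "ren g (subst \<theta> t) = subst (ren g \<circ> \<theta>) (ren g t)"
  by (induction t) auto

lemma ren_ren: "(\<And>c. h (g c) = c) \<Longrightarrow> ren h (ren g t) = t"
  by (induction t) (auto intro: map_idI)

lemma vars_ren: "vars (ren g t) = vars t"
  by (induction t) auto

lemma ren_fix: "\<not> usesP t \<Longrightarrow> (\<And>c. c \<notin> PosSet \<Longrightarrow> g c = c) \<Longrightarrow> ren g t = t"
  by (induction t) (auto intro: map_idI simp: list_ex_iff)

lemma usesP_ren_subst: "renaming \<rho> \<Longrightarrow> usesP (subst \<rho> t) = usesP t"
  by (induction t) (auto simp: renaming_def list_ex_iff)

lemma ren_renaming: "renaming \<rho> \<Longrightarrow> ren g \<circ> \<rho> = \<rho>"
  by (auto simp: renaming_def)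

definition sh :: "trm \<Rightarrow> bool" where "sh t \<longleftrightarrow> (\<exists>c r. t = Bul (Cst c) r)"

fun phi :: "(const \<Rightarrow> const) \<Rightarrow> trm \<Rightarrow> trm" where
  "phi g (Bul (Cst c) r) = Bul (Cst c) (ren g r)"
| "phi g t = ren g t"

lemma phi_subst: "sh t \<Longrightarrow> phi g (subst \<theta> t) = subst (ren g \<circ> \<theta>) (phi g t)"
  by (auto simp: sh_def ren_subst)

lemma sh_subst: "sh t \<Longrightarrow> sh (subst \<theta> t)"
  by (auto simp: sh_def)

lemma sh_phi: "sh t \<Longrightarrow> sh (phi g t)"
  by (auto simp: sh_def)

lemma phi_phi: "sh t \<Longrightarrow> (\<And>c. h (g c) = c) \<Longrightarrow> phi h (phi g t) = t"
  by (auto simp: sh_def ren_ren)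

lemma vars_phi: "sh t \<Longrightarrow> vars (phi g t) = vars t"
  by (auto simp: sh_def vars_ren)

lemma mgu_phi:
  assumes gh: "\<And>c. g (h c) = c" and hg: "\<And>c. h (g c) = c"
    and sa: "sh a" and sb: "sh b" and m: "is_mgu \<theta> a b"
  shows "is_mgu (ren g \<circ> \<theta>) (phi g a) (phi g b)"
  unfolding is_mgu_def
proof (intro conjI allI impI)
  show "subst (ren g \<circ> \<theta>) (phi g a) = subst (ren g \<circ> \<theta>) (phi g b)"
    using m sa sb by (metis is_mgu_def phi_subst)
next
  fix \<sigma> assume e: "subst \<sigma> (phi g a) = subst \<sigma> (phi g b)"
  define \<sigma>' where "\<sigma>' = ren h \<circ> \<sigma>"
  have rs: "ren g \<circ> \<sigma>' = \<sigma>" unfolding \<sigma>'_def using ren_ren[of g h] gh by auto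
  have "phi g (subst \<sigma>' a) = phi g (subst \<sigma>' b)"
    using e rs phi_subst[OF sa] phi_subst[OF sb] by metis
  then have "phi h (phi g (subst \<sigma>' a)) = phi h (phi g (subst \<sigma>' b))" by simp
  then have "subst \<sigma>' a = subst \<sigma>' b"
    using phi_phi[of "subst \<sigma>' a" h g, OF sh_subst[OF sa] hg] phi_phi[of "subst \<sigma>' b" h g, OF sh_subst[OF sb] hg] by metis
  then obtain \<tau> where t: "\<And>x. \<sigma>' x = subst \<tau> (\<theta> x)" using m unfolding is_mgu_def by blast
  show "\<exists>\<tau>. \<forall>x. \<sigma> x = subst \<tau> ((ren g \<circ> \<theta>) x)"
  proof (intro exI allI)
    fix x
    have "\<sigma> x = ren g (\<sigma>' x)" using rs by (metis comp_apply)
    also have "\<dots> = subst (ren g \<circ> \<tau>) ((ren g \<circ> \<theta>) x)" using t ren_subst by simp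
    finally show "\<sigma> x = subst (ren g \<circ> \<tau>) ((ren g \<circ> \<theta>) x)" .
  qed
qed

definition fm :: "(const \<Rightarrow> const) \<Rightarrow> flow \<Rightarrow> flow" where
  "fm g f = (\<lambda>(a, b). (phi g a, phi g b)) ` f"

definition shF :: "wiring \<Rightarrow> bool" where
  "shF F \<longleftrightarrow> (\<forall>f\<in>F. \<forall>(a, b)\<in>f. sh a \<and> sh b)"

lemma fm_cls: assumes sa: "sh a" and sb: "sh b" shows "fm g (cls (a, b)) = cls (phi g a, phi g b)"
proof
  show "fm g (cls (a, b)) \<subseteq> cls (phi g a, phi g b)"
    unfolding fm_def cls_def using sa sb by (auto simp: phi_subst ren_renaming)
  show "cls (phi g a, phi g b) \<subseteq> fm g (cls (a, b))"
  proof
    fix z assume "z \<in> cls (phi g a, phi g b)"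
    then obtain \<rho> where r: "renaming \<rho>" and z: "z = (subst \<rho> (phi g a), subst \<rho> (phi g b))"
      unfolding cls_def by auto
    have "z = (\<lambda>(a, b). (phi g a, phi g b)) (subst \<rho> a, subst \<rho> b)"
      using z r sa sb by (simp add: phi_subst ren_renaming)
    moreover have "(subst \<rho> a, subst \<rho> b) \<in> cls (a, b)" using r unfolding cls_def by auto
    ultimately show "z \<in> fm g (cls (a, b))" unfolding fm_def by blast
  qed
qed

lemma cls_sh: "sh a \<Longrightarrow> sh b \<Longrightarrow> (x, y) \<in> cls (a, b) \<Longrightarrow> sh x \<and> sh y"
  unfolding cls_def by (auto intro: sh_subst)


lemma shF_wprod: "shF F \<Longrightarrow> shF G \<Longrightarrow> shF (wprod F G)"
proof -
  assume sF: "shF F" and sG: "shF G"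
  show ?thesis unfolding shF_def
  proof (intro ballI)
    fix f z assume "f \<in> wprod F G" and z: "z \<in> f"
    then obtain f1 k u v t w \<theta> where f1: "f1 \<in> F" and k: "k \<in> G" and uv: "(u, v) \<in> f1"
      and tw: "(t, w) \<in> k" and fe: "f = cls (subst \<theta> u, subst \<theta> w)"
      unfolding wprod_def by blast
    have "sh u" "sh w" using sF sG f1 k uv tw unfolding shF_def by fastforce+
    then show "case z of (a, b) \<Rightarrow> sh a \<and> sh b"
      using z fe cls_sh sh_subst by (cases z) blast
  qed
qed

lemma wprod_mono: "F \<subseteq> F' \<Longrightarrow> G \<subseteq> G' \<Longrightarrow> wprod F G \<subseteq> wprod F' G'"
  unfolding wprod_def by blast

lemma wpow_mono: "F \<subseteq> F' \<Longrightarrow> wpow F n \<subseteq> wpow F' n"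
proof (induction n)
  case 0 then show ?case by simp
next
  case (Suc n) then show ?case using wprod_mono[OF Suc.IH \<open>F \<subseteq> F'\<close>] by simp
qed

lemma shF_wpow: "shF F \<Longrightarrow> shF (wpow F n)"
  by (induction n) (auto intro: shF_wprod)

lemma rvars_phi: "sh a \<Longrightarrow> sh b \<Longrightarrow> rvars (phi g a, phi g b) = rvars (a, b)"
  by (simp add: rvars_def vars_phi)

lemma fm_wprod:
  assumes gh: "\<And>c. g (h c) = c" and hg: "\<And>c. h (g c) = c"
    and sF: "shF F" and sG: "shF G"
  shows "fm g ` wprod F G \<subseteq> wprod (fm g ` F) (fm g ` G)"
proof
  fix x assume "x \<in> fm g ` wprod F G"
  then obtain y where y1: "y \<in> wprod F G" and y2: "x = fm g y" by (rule imageE) 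
  from y1 obtain f k u v t w \<theta> where
    H: "f \<in> F \<and> k \<in> G \<and> (u, v) \<in> f \<and> (t, w) \<in> k \<and> rvars (u, v) \<inter> rvars (t, w) = {} \<and> is_mgu \<theta> v t"
    and ye: "y = cls (subst \<theta> u, subst \<theta> w)"
    unfolding wprod_def mem_Collect_eq by (elim exE conjE) (simp only:)
  have f: "f \<in> F" and k: "k \<in> G" and uv: "(u, v) \<in> f"
    and tw: "(t, w) \<in> k" and d: "rvars (u, v) \<inter> rvars (t, w) = {}" and m: "is_mgu \<theta> v t"
    using H by simp_all
  have x: "x = fm g (cls (subst \<theta> u, subst \<theta> w))" using y2 ye by simp
  have A: "\<forall>(a, b)\<in>f. sh a \<and> sh b" using sF f unfolding shF_def by (rule bspec)
  have B: "\<forall>(a, b)\<in>k. sh a \<and> sh b" using sG k unfolding shF_def by (rule bspec)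
  have s12: "sh u \<and> sh v" using bspec[OF A uv] by simp
  have s34: "sh t \<and> sh w" using bspec[OF B tw] by simp
  have s: "sh u" "sh v" "sh t" "sh w" using s12 s34 by simp_all
  have x': "x = cls (subst (ren g \<circ> \<theta>) (phi g u), subst (ren g \<circ> \<theta>) (phi g w))"
    using x s by (simp add: fm_cls sh_subst phi_subst)
  have 1: "fm g f \<in> fm g ` F" "fm g k \<in> fm g ` G" using f k by auto
  have 2: "(phi g u, phi g v) \<in> fm g f" "(phi g t, phi g w) \<in> fm g k"
    using uv tw unfolding fm_def by (auto intro: rev_image_eqI)
  have 3: "rvars (phi g u, phi g v) \<inter> rvars (phi g t, phi g w) = {}"
    using d s by (simp add: rvars_phi)
  have 4: "is_mgu (ren g \<circ> \<theta>) (phi g v) (phi g t)" using mgu_phi[OF gh hg s(2,3) m] .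
  show "x \<in> wprod (fm g ` F) (fm g ` G)"
    unfolding wprod_def mem_Collect_eq
    apply (rule exI[of _ "fm g f"], rule exI[of _ "fm g k"], rule exI[of _ "phi g u"],
        rule exI[of _ "phi g v"], rule exI[of _ "phi g t"], rule exI[of _ "phi g w"],
        rule exI[of _ "ren g \<circ> \<theta>"])
    using 1 2 3 4 x' by simp
qed

lemma fm_mono: "A \<subseteq> B \<Longrightarrow> fm g ` A \<subseteq> fm g ` B" by (rule image_mono)

lemma fm_wpow:
  assumes gh: "\<And>c. g (h c) = c" and hg: "\<And>c. h (g c) = c" and sF: "shF F"
  shows "fm g ` wpow F n \<subseteq> wpow (fm g ` F) n"
proof (induction n)
  case 0 then show ?case by simp
next
  case (Suc n)
  have "fm g ` wpow F (Suc n) \<subseteq> wprod (fm g ` wpow F n) (fm g ` F)"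
    using fm_wprod[OF gh hg shF_wpow[OF sF] sF] by simp
  also have "\<dots> \<subseteq> wprod (wpow (fm g ` F) n) (fm g ` F)"
    using wprod_mono[OF Suc.IH subset_refl] .
  finally show ?case by simp
qed

lemma core_abstract:
  assumes gh: "\<And>c. g (h c) = c" and hg: "\<And>c. h (g c) = c"
    and sO: "shF Ob" and sP: "shF Wp" and fO: "fm g ` Ob \<subseteq> Ob" and fW: "fm g ` Wp \<subseteq> Wq"
    and nq: "nilpotent (wprod Ob Wq)"
  shows "nilpotent (wprod Ob Wp)"
proof -
  obtain n where n: "wpow (wprod Ob Wq) n = {}" using nq unfolding nilpotent_def by blast
  have sX: "shF (wprod Ob Wp)" using shF_wprod[OF sO sP] .
  have "fm g ` wprod Ob Wp \<subseteq> wprod (fm g ` Ob) (fm g ` Wp)" using fm_wprod[OF gh hg sO sP] .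
  also have "\<dots> \<subseteq> wprod Ob Wq" using fO fW by (rule wprod_mono)
  finally have X: "fm g ` wprod Ob Wp \<subseteq> wprod Ob Wq" .
  have "fm g ` wpow (wprod Ob Wp) n \<subseteq> wpow (wprod Ob Wq) n"
    using fm_wpow[OF gh hg sX, of n] wpow_mono[OF X, of n] by (rule subset_trans)
  then have "fm g ` wpow (wprod Ob Wp) n = {}" using n by simp
  then have "wpow (wprod Ob Wp) n = {}" by simp
  then show ?thesis unfolding nilpotent_def by blast
qed


lemma cls_mem: "(a, b) \<in> cls (x, y) \<Longrightarrow> \<exists>\<rho>. renaming \<rho> \<and> a = subst \<rho> x \<and> b = subst \<rho> y"
  unfolding cls_def mem_Collect_eq by (elim exE conjE) (simp only: prod.inject fst_conv snd_conv, blast)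

lemma stensor_reps:
  assumes "F' \<in> stensor A B" "f \<in> F'" "(a, b) \<in> f"
  shows "\<exists>F\<in>A. \<exists>G\<in>B. \<exists>\<rho> u v t w. (u, v) \<in> \<Union>F \<and> (t, w) \<in> \<Union>G \<and> renaming \<rho> \<and>
           a = Bul (subst \<rho> u) (subst \<rho> t) \<and> b = Bul (subst \<rho> v) (subst \<rho> w)"
proof -
  obtain ps where H: "F' = (\<Union>FG\<in>set ps. wtensor (fst FG) (snd FG)) \<and> set ps \<subseteq> A \<times> B"
    using assms(1) unfolding stensor_def mem_Collect_eq by (elim exE) (erule that)
  then have "f \<in> (\<Union>FG\<in>set ps. wtensor (fst FG) (snd FG))" using assms(2) by simp
  then obtain FG where FG: "FG \<in> set ps" and fin: "f \<in> wtensor (fst FG) (snd FG)" by (rule UN_E)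
  obtain f1 g1 u v t w where H2: "f = cls (Bul u t, Bul v w) \<and> f1 \<in> fst FG \<and> g1 \<in> snd FG \<and> (u, v) \<in> f1 \<and>
      (t, w) \<in> g1 \<and> rvars (u, v) \<inter> rvars (t, w) = {}"
    using fin unfolding wtensor_def mem_Collect_eq by (elim exE) (erule that)
  obtain \<rho> where r: "renaming \<rho>" and ab1: "a = Bul (subst \<rho> u) (subst \<rho> t)"
     and ab2: "b = Bul (subst \<rho> v) (subst \<rho> w)"
    using cls_mem[of a b "Bul u t" "Bul v w"] assms(3) H2 by auto
  have m: "fst FG \<in> A" "snd FG \<in> B" using FG H by auto
  have u1: "(u, v) \<in> \<Union>(fst FG)" "(t, w) \<in> \<Union>(snd FG)" using H2 by auto
  show ?thesis
    apply (rule bexI[OF _ m(1)], rule bexI[OF _ m(2)])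
    apply (rule exI[of _ \<rho>], rule exI[of _ u], rule exI[of _ v], rule exI[of _ t], rule exI[of _ w])
    using u1 r ab1 ab2 by simp
qed

lemma Cl_reps:
  assumes "F \<in> Cl (Cst ` C)" "f \<in> F" "(a, b) \<in> f"
  shows "\<exists>c\<in>C. \<exists>c'\<in>C. a = Cst c \<and> b = Cst c'"
proof -
  have "\<exists>t\<in>Cst ` C. \<exists>u\<in>Cst ` C. f = cls (t, u)" using assms(1,2) unfolding Cl_def by simp
  then obtain c c' where c: "c \<in> C" "c' \<in> C" and fe: "f = cls (Cst c, Cst c')" by auto
  then obtain \<rho> where "a = subst \<rho> (Cst c)" "b = subst \<rho> (Cst c')"
    using cls_mem[of a b] assms(3) by blast
  then show ?thesis using c by auto
qed

lemma Obs_reps: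
  assumes "F \<in> Obs" "f \<in> F" "(a, b) \<in> f"
  shows "\<not> usesP a \<and> \<not> usesP b"
proof -
  from stensor_reps[OF assms[unfolded Obs_def]] obtain F1 G \<rho> u v t w where
    F1: "F1 \<in> Cl (Cst ` StateSet)" and G: "G \<in> RP Bal" and uv: "(u, v) \<in> \<Union>F1" and tw: "(t, w) \<in> \<Union>G"
    and r: "renaming \<rho>" and ab: "a = Bul (subst \<rho> u) (subst \<rho> t)" "b = Bul (subst \<rho> v) (subst \<rho> w)"
    by blast
  from uv obtain f1 where "f1 \<in> F1" "(u, v) \<in> f1" by blast
  with Cl_reps[OF F1] obtain c c' where "c \<in> StateSet" "c' \<in> StateSet" "u = Cst c" "v = Cst c'" by blast
  then have 1: "\<not> usesP u" "\<not> usesP v" by (auto simp: StateSet_def PosSet_def)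
  from tw obtain g1 where "g1 \<in> G" "(t, w) \<in> g1" by blast
  with G have 2: "\<not> usesP t" "\<not> usesP w" unfolding RP_def by fastforce+
  show ?thesis using 1 2 ab by (simp add: usesP_ren_subst[OF r])
qed

lemma LR_reps:
  assumes "F \<in> stensor (Cl (Cst ` {CL, CR})) Obs" "f \<in> F" "(a, b) \<in> f"
  shows "\<not> usesP a \<and> \<not> usesP b"
proof -
  from stensor_reps[OF assms] obtain F1 G \<rho> u v t w where
    F1: "F1 \<in> Cl (Cst ` {CL, CR})" and G: "G \<in> Obs" and uv: "(u, v) \<in> \<Union>F1" and tw: "(t, w) \<in> \<Union>G"
    and r: "renaming \<rho>" and ab: "a = Bul (subst \<rho> u) (subst \<rho> t)" "b = Bul (subst \<rho> v) (subst \<rho> w)"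
    by blast
  from uv obtain f1 where "f1 \<in> F1" "(u, v) \<in> f1" by blast
  with Cl_reps[OF F1] obtain c c' where "c \<in> {CL, CR}" "c' \<in> {CL, CR}" "u = Cst c" "v = Cst c'" by blast
  then have 1: "\<not> usesP u" "\<not> usesP v" by (auto simp: PosSet_def)
  from tw obtain g1 where "g1 \<in> G" "(t, w) \<in> g1" by blast
  with Obs_reps[OF G] have 2: "\<not> usesP t" "\<not> usesP w" by blast+
  show ?thesis using 1 2 ab by (simp add: usesP_ren_subst[OF r])
qed

lemma Matr_reps:
  assumes "Ob \<in> Matr \<Sigma> Obs" "f \<in> Ob" "(a, b) \<in> f"
  shows "(\<exists>c r. a = Bul (Cst c) r \<and> \<not> usesP r) \<and> (\<exists>c r. b = Bul (Cst c) r \<and> \<not> usesP r)"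
proof -
  from stensor_reps[OF assms[unfolded Matr_def]] obtain F1 G \<rho> u v t w where
    F1: "F1 \<in> Cl (Cst ` (\<Sigma> \<union> {Star}))" and G: "G \<in> stensor (Cl (Cst ` {CL, CR})) Obs"
    and uv: "(u, v) \<in> \<Union>F1" and tw: "(t, w) \<in> \<Union>G"
    and r: "renaming \<rho>" and ab: "a = Bul (subst \<rho> u) (subst \<rho> t)" "b = Bul (subst \<rho> v) (subst \<rho> w)"
    by blast
  from uv obtain f1 where "f1 \<in> F1" "(u, v) \<in> f1" by blast
  with Cl_reps[OF F1] obtain c c' where "u = Cst c" "v = Cst c'" by blast
  moreover from tw obtain g1 where "g1 \<in> G" "(t, w) \<in> g1" by blast
  with LR_reps[OF G] have 2: "\<not> usesP t" "\<not> usesP w" by blast+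
  ultimately show ?thesis using ab by (simp add: usesP_ren_subst[OF r])
qed

lemma Matr_sh: "Ob \<in> Matr \<Sigma> Obs \<Longrightarrow> shF Ob"
  unfolding shF_def sh_def using Matr_reps by fast

lemma Matr_fm:
  assumes "Ob \<in> Matr \<Sigma> Obs" and fx: "\<And>c. c \<notin> PosSet \<Longrightarrow> g c = c"
  shows "fm g ` Ob \<subseteq> Ob"
proof
  fix x assume "x \<in> fm g ` Ob"
  then obtain f where f: "f \<in> Ob" and x: "x = fm g f" by blast
  have "fm g f = (\<lambda>x. x) ` f" unfolding fm_def
  proof (rule image_cong[OF refl])
    fix z assume z: "z \<in> f"
    obtain a b where zab: "z = (a, b)" by (cases z)
    from Matr_reps[OF assms(1) f z[unfolded zab]] obtain c r c' r' where
      "a = Bul (Cst c) r" "\<not> usesP r" "b = Bul (Cst c') r'" "\<not> usesP r'" by blast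
    then show "(case z of (a, b) \<Rightarrow> (phi g a, phi g b)) = z" using zab by (simp add: ren_fix fx)
  qed
  then have "fm g f = f" by simp
  then show "x \<in> Ob" using f x by simp
qed


fun cmap :: "(nat \<Rightarrow> nat) \<Rightarrow> const \<Rightarrow> const" where
  "cmap \<pi> (CP k) = CP (\<pi> k)"
| "cmap \<pi> c = c"

lemma cmap_fix: "c \<notin> PosSet \<Longrightarrow> cmap \<pi> c = c"
  by (cases c) (auto simp: PosSet_def)

lemma cmap_inv: "(\<And>k. \<pi> (\<pi> k) = k) \<Longrightarrow> cmap \<pi> (cmap \<pi> c) = c"
  by (cases c) auto

lemma sh_wpt: "sh (wpt c d pos)" by (simp add: wpt_def sh_def)

lemma phi_wpt: "d \<in> {CL, CR} \<Longrightarrow> phi (cmap \<pi>) (wpt c d (CP k)) = wpt c d (CP (\<pi> k))"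
  by (auto simp: wpt_def)

lemma pair_sh:
  assumes "f \<in> {cls (A, B), cls (B, A)}" "sh A" "sh B" "z \<in> f"
  shows "case z of (a, b) \<Rightarrow> sh a \<and> sh b"
proof -
  obtain a b where zab: "z = (a, b)" by (cases z)
  have fo: "f = cls (A, B) \<or> f = cls (B, A)" using assms(1) by simp
  have m: "(a, b) \<in> f" using assms(4) zab by simp
  have "sh a \<and> sh b"
  proof (cases "f = cls (A, B)")
    case True then show ?thesis using cls_sh[OF assms(2,3)] m by simp
  next
    case False then have "f = cls (B, A)" using fo by simp
    then show ?thesis using cls_sh[OF assms(3,2)] m by simp
  qed
  then show ?thesis using zab by simp
qed

lemma wordrep_sh: "shF (wordrep W p)"
  unfolding shF_def
proof (intro ballI)
  fix f z assume f: "f \<in> wordrep W p" and z: "z \<in> f"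
  from f obtain i where "f \<in> {cls (wpt (letter W i) CL (CP (p ! i)), wpt (letter W (Suc i)) CR (CP (p ! (if i = length W then 0 else Suc i)))),
             cls (wpt (letter W (Suc i)) CR (CP (p ! (if i = length W then 0 else Suc i))), wpt (letter W i) CL (CP (p ! i)))}"
    unfolding wordrep_def Let_def by (rule UN_E)
  from pair_sh[OF this sh_wpt sh_wpt z] show "case z of (a, b) \<Rightarrow> sh a \<and> sh b" .
qed

lemma pair_fm:
  assumes "f \<in> {cls (wpt c1 CL (CP k1), wpt c2 CR (CP k2)), cls (wpt c2 CR (CP k2), wpt c1 CL (CP k1))}"
  shows "fm (cmap \<pi>) f \<in> {cls (wpt c1 CL (CP (\<pi> k1)), wpt c2 CR (CP (\<pi> k2))), cls (wpt c2 CR (CP (\<pi> k2)), wpt c1 CL (CP (\<pi> k1)))}"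
proof -
  have fo: "f = cls (wpt c1 CL (CP k1), wpt c2 CR (CP k2)) \<or> f = cls (wpt c2 CR (CP k2), wpt c1 CL (CP k1))"
    using assms by simp
  have p1: "phi (cmap \<pi>) (wpt c1 CL (CP k1)) = wpt c1 CL (CP (\<pi> k1))" by (rule phi_wpt) simp
  have p2: "phi (cmap \<pi>) (wpt c2 CR (CP k2)) = wpt c2 CR (CP (\<pi> k2))" by (rule phi_wpt) simp
  show ?thesis
  proof (cases "f = cls (wpt c1 CL (CP k1), wpt c2 CR (CP k2))")
    case True then show ?thesis by (simp only: fm_cls[OF sh_wpt sh_wpt] p1 p2) simp
  next
    case False then have "f = cls (wpt c2 CR (CP k2), wpt c1 CL (CP k1))" using fo by simp
    then show ?thesis by (simp only: fm_cls[OF sh_wpt sh_wpt] p1 p2) simp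
  qed
qed

lemma wordrep_fm:
  assumes "\<And>i. i \<le> length W \<Longrightarrow> \<pi> (p ! i) = q ! i"
  shows "fm (cmap \<pi>) ` wordrep W p \<subseteq> wordrep W q"
proof
  fix x assume "x \<in> fm (cmap \<pi>) ` wordrep W p"
  then obtain f where f1: "f \<in> wordrep W p" and x: "x = fm (cmap \<pi>) f" by (rule imageE)
  from f1 obtain i where i: "i \<in> {0..length W}" and
    f: "f \<in> {cls (wpt (letter W i) CL (CP (p ! i)), wpt (letter W (Suc i)) CR (CP (p ! (if i = length W then 0 else Suc i)))),
             cls (wpt (letter W (Suc i)) CR (CP (p ! (if i = length W then 0 else Suc i))), wpt (letter W i) CL (CP (p ! i)))}"
    unfolding wordrep_def Let_def by (rule UN_E)
  have e1: "\<pi> (p ! i) = q ! i" using assms i by simp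
  have e2: "\<pi> (p ! (if i = length W then 0 else Suc i)) = q ! (if i = length W then 0 else Suc i)"
    using assms i by simp
  have "x \<in> {cls (wpt (letter W i) CL (CP (q ! i)), wpt (letter W (Suc i)) CR (CP (q ! (if i = length W then 0 else Suc i)))),
             cls (wpt (letter W (Suc i)) CR (CP (q ! (if i = length W then 0 else Suc i))), wpt (letter W i) CL (CP (q ! i)))}"
    using pair_fm[OF f, of \<pi>] x unfolding e1 e2 by simp
  then show "x \<in> wordrep W q" unfolding wordrep_def Let_def using i by (rule UN_I[rotated])
qed

lemma core:
  assumes inv: "\<And>k. \<pi> (\<pi> k) = k" and map: "\<And>i. i \<le> length W \<Longrightarrow> \<pi> (p ! i) = q ! i"
    and Ob: "Ob \<in> Matr \<Sigma> Obs" and nq: "nilpotent (wprod Ob (wordrep W q))"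
  shows "nilpotent (wprod Ob (wordrep W p))"
  by (rule core_abstract[where g = "cmap \<pi>" and h = "cmap \<pi>" and Wq = "wordrep W q",
       OF cmap_inv[OF inv] cmap_inv[OF inv] Matr_sh[OF Ob] wordrep_sh Matr_fm[OF Ob cmap_fix] wordrep_fm[OF map] nq])

definition sw :: "nat list \<Rightarrow> nat list \<Rightarrow> nat \<Rightarrow> nat" where
  "sw p r x = (case map_of (zip p r) x of Some y \<Rightarrow> y
     | None \<Rightarrow> (case map_of (zip r p) x of Some y \<Rightarrow> y | None \<Rightarrow> x))"

lemma sw_props:
  assumes l: "length p = length r" and dp: "distinct p" and dr: "distinct r"
    and dj: "set p \<inter> set r = {}"
  shows "\<And>i. i < length p \<Longrightarrow> sw p r (p ! i) = r ! i"
    and "\<And>i. i < length p \<Longrightarrow> sw p r (r ! i) = p ! i"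
    and "\<And>k. sw p r (sw p r k) = k"
proof -
  show 1: "\<And>i. i < length p \<Longrightarrow> sw p r (p ! i) = r ! i"
    unfolding sw_def using map_of_zip_nth[OF l dp] l by simp
  show 2: "\<And>i. i < length p \<Longrightarrow> sw p r (r ! i) = p ! i"
  proof -
    fix i assume i: "i < length p"
    have "r ! i \<notin> set p" using dj i l nth_mem by fastforce
    then have N: "map_of (zip p r) (r ! i) = None" using l by simp
    have S: "map_of (zip r p) (r ! i) = Some (p ! i)" using map_of_zip_nth[OF l[symmetric] dr] l i by simp
    show "sw p r (r ! i) = p ! i" unfolding sw_def by (simp only: N S option.case)
  qed
  fix k
  show "sw p r (sw p r k) = k"
  proof (cases "k \<in> set p")
    case True
    then obtain i where "i < length p" "k = p ! i" by (auto simp: in_set_conv_nth)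
    then show ?thesis using 1 2 by simp
  next
    case False
    show ?thesis
    proof (cases "k \<in> set r")
      case True
      then obtain i where "i < length p" "k = r ! i" using l by (auto simp: in_set_conv_nth)
      then show ?thesis using 1 2 by simp
    next
      case False2: False
      have N1: "map_of (zip p r) k = None" using False l by simp
      have N2: "map_of (zip r p) k = None" using False2 l by simp
      have "sw p r k = k" unfolding sw_def by (simp only: N1 N2 option.case)
      then show ?thesis by simp
    qed
  qed
qed

theorem mainTheorem9:
  fixes \<Sigma> :: "const set" and W :: "const list" and p q :: "nat list" and Ob :: wiring
  assumes "Star \<notin> \<Sigma>" and "set W \<subseteq> \<Sigma>"
    and "length p = length W + 1" and "distinct p"
    and "length q = length W + 1" and "distinct q"
    and "Ob \<in> Matr \<Sigma> Obs"
  shows "nilpotent (wprod Ob (wordrep W p)) \<longleftrightarrow> nilpotent (wprod Ob (wordrep W q))"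
proof -
  define M where "M = Suc (Max (set (p @ q)))"
  define r where "r = map (\<lambda>i. M + i) [0..<length W + 1]"
  have lr: "length r = length W + 1" unfolding r_def by simp
  have dr: "distinct r" unfolding r_def by (simp add: distinct_map inj_on_def)
  have big: "\<And>x. x \<in> set r \<Longrightarrow> x \<ge> M" unfolding r_def by auto
  have small: "\<And>x. x \<in> set (p @ q) \<Longrightarrow> x < M" unfolding M_def by (simp add: le_imp_less_Suc)
  have djp: "set p \<inter> set r = {}" using big small by fastforce
  have djq: "set q \<inter> set r = {}" using big small by fastforce
  have step: "nilpotent (wprod Ob (wordrep W s)) \<longleftrightarrow> nilpotent (wprod Ob (wordrep W r))"
    if ls: "length s = length W + 1" and ds: "distinct s" and dj: "set s \<inter> set r = {}" for s
  proof -
    have l: "length s = length r" using ls lr by simp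
    note P = sw_props[OF l ds dr dj]
    have m1: "\<And>i. i \<le> length W \<Longrightarrow> sw s r (r ! i) = s ! i" using P(2) ls by auto
    have m2: "\<And>i. i \<le> length W \<Longrightarrow> sw s r (s ! i) = r ! i" using P(1) ls by auto
    have c1: "nilpotent (wprod Ob (wordrep W s)) \<Longrightarrow> nilpotent (wprod Ob (wordrep W r))"
      by (rule core[of "sw s r", OF P(3) m1 assms(7)])
    have c2: "nilpotent (wprod Ob (wordrep W r)) \<Longrightarrow> nilpotent (wprod Ob (wordrep W s))"
      by (rule core[of "sw s r", OF P(3) m2 assms(7)])
    show ?thesis using c1 c2 by (rule iffI)
  qed
  have s1: "nilpotent (wprod Ob (wordrep W p)) \<longleftrightarrow> nilpotent (wprod Ob (wordrep W r))"
    by (rule step[OF assms(3,4) djp])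
  have s2: "nilpotent (wprod Ob (wordrep W q)) \<longleftrightarrow> nilpotent (wprod Ob (wordrep W r))"
    by (rule step[OF assms(5,6) djq])
  show ?thesis using s1 s2 by (rule iffI[OF _ _] | blast)
qed

end
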